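(* Let $(X,\tau)$ be a locally compact Hausdorff space that is non-compact, Lindelöf and zero-dimensional. If $\delta$ is a quasi-proximity compatible with $\tau$ such that $\mathcal{V}_\delta$ is transitive, then $|\pi(\delta)\cap T(\tau)|\ge 2^{2^{\aleph_0}}$.
   Context: Quasi-uniformities and quasi-proximities are in the sense of Fletcher–Lindgren; compatible means inducing $\tau$. $\pi(\delta)$ is the set of all quasi-uniformities inducing $\delta$, and $\mathcal{V}_\delta$ is its coarsest (totally bounded) element. A quasi-uniformity is transitive if it has a base of transitive entourages. $T(\tau)$ is the set of compatible transitive quasi-uniformities on $(X,\tau)$. *)

theory Defs
  imports "HOL-Analysis.Analysis"
begin

definition quasi_uniformity :: "'a set \<Rightarrow> ('a \<times> 'a) set set \<Rightarrow> bool" where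
  "quasi_uniformity S \<U> \<longleftrightarrow>
     \<U> \<noteq> {} \<and>
     (\<forall>U\<in>\<U>. Id_on S \<subseteq> U \<and> U \<subseteq> S \<times> S) \<and>
     (\<forall>U\<in>\<U>. \<forall>V\<in>\<U>. U \<inter> V \<in> \<U>) \<and>
     (\<forall>U\<in>\<U>. \<forall>V. U \<subseteq> V \<and> V \<subseteq> S \<times> S \<longrightarrow> V \<in> \<U>) \<and>
     (\<forall>U\<in>\<U>. \<exists>V\<in>\<U>. V O V \<subseteq> U)"

definition qu_compatible :: "'a topology \<Rightarrow> ('a \<times> 'a) set set \<Rightarrow> bool" where
  "qu_compatible X \<U> \<longleftrightarrow>
     (\<forall>G. openin X G \<longleftrightarrow> G \<subseteq> topspace X \<and> (\<forall>x\<in>G. \<exists>U\<in>\<U>. U `` {x} \<subseteq> G))"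

definition transitive_qu :: "('a \<times> 'a) set set \<Rightarrow> bool" where
  "transitive_qu \<U> \<longleftrightarrow> (\<forall>U\<in>\<U>. \<exists>V\<in>\<U>. trans V \<and> V \<subseteq> U)"

definition quasi_proximity :: "'a set \<Rightarrow> ('a set \<Rightarrow> 'a set \<Rightarrow> bool) \<Rightarrow> bool" where
  "quasi_proximity S \<delta> \<longleftrightarrow>
     (\<forall>A B. \<delta> A B \<longrightarrow> A \<subseteq> S \<and> B \<subseteq> S) \<and>
     (\<forall>A\<subseteq>S. \<not> \<delta> A {} \<and> \<not> \<delta> {} A) \<and>
     (\<forall>A\<subseteq>S. \<forall>B\<subseteq>S. A \<inter> B \<noteq> {} \<longrightarrow> \<delta> A B) \<and>
     (\<forall>A\<subseteq>S. \<forall>B\<subseteq>S. \<forall>C\<subseteq>S. \<delta> (A \<union> B) C \<longleftrightarrow> \<delta> A C \<or> \<delta> B C) \<and>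
     (\<forall>A\<subseteq>S. \<forall>B\<subseteq>S. \<forall>C\<subseteq>S. \<delta> A (B \<union> C) \<longleftrightarrow> \<delta> A B \<or> \<delta> A C) \<and>
     (\<forall>A\<subseteq>S. \<forall>B\<subseteq>S. \<not> \<delta> A B \<longrightarrow> (\<exists>C\<subseteq>S. \<not> \<delta> A C \<and> \<not> \<delta> (S - C) B))"

text \<open>Topology induced by a quasi-proximity: closure of A is the set of x with {x} delta A.\<close>
definition qp_compatible :: "'a topology \<Rightarrow> ('a set \<Rightarrow> 'a set \<Rightarrow> bool) \<Rightarrow> bool" where
  "qp_compatible X \<delta> \<longleftrightarrow>
     (\<forall>G. openin X G \<longleftrightarrow> G \<subseteq> topspace X \<and> (\<forall>x\<in>G. \<not> \<delta> {x} (topspace X - G)))"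

definition qprox_of :: "'a set \<Rightarrow> ('a \<times> 'a) set set \<Rightarrow> 'a set \<Rightarrow> 'a set \<Rightarrow> bool" where
  "qprox_of S \<U> A B \<longleftrightarrow> A \<subseteq> S \<and> B \<subseteq> S \<and> (\<forall>U\<in>\<U>. (A \<times> B) \<inter> U \<noteq> {})"

definition qp_class :: "'a set \<Rightarrow> ('a set \<Rightarrow> 'a set \<Rightarrow> bool) \<Rightarrow> ('a \<times> 'a) set set set" where
  "qp_class S \<delta> = {\<U>. quasi_uniformity S \<U> \<and> qprox_of S \<U> = \<delta>}"

definition coarsest_qu :: "'a set \<Rightarrow> ('a set \<Rightarrow> 'a set \<Rightarrow> bool) \<Rightarrow> ('a \<times> 'a) set set" where
  "coarsest_qu S \<delta> = (THE \<V>. \<V> \<in> qp_class S \<delta> \<and> (\<forall>\<U>\<in>qp_class S \<delta>. \<V> \<subseteq> \<U>))"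

definition transitive_compatible_qus :: "'a topology \<Rightarrow> ('a \<times> 'a) set set set" where
  "transitive_compatible_qus X =
     {\<U>. quasi_uniformity (topspace X) \<U> \<and> qu_compatible X \<U> \<and> transitive_qu \<U>}"

end

theory Submission
  imports Defs
begin


lemma qu_int: "quasi_uniformity S U \<Longrightarrow> V\<in>U \<Longrightarrow> W\<in>U \<Longrightarrow> V\<inter>W\<in>U"
  unfolding quasi_uniformity_def by (elim conjE) (drule bspec, assumption, drule bspec, assumption)
lemma qu_sup: "quasi_uniformity S U \<Longrightarrow> V\<in>U \<Longrightarrow> V \<subseteq> W \<Longrightarrow> W \<subseteq> S \<times> S \<Longrightarrow> W\<in>U"
  unfolding quasi_uniformity_def by (elim conjE) (drule bspec, assumption, blast)
lemma qu_sub: "quasi_uniformity S U \<Longrightarrow> V\<in>U \<Longrightarrow> V \<subseteq> S \<times> S"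
  unfolding quasi_uniformity_def by (elim conjE) (drule bspec, assumption, blast)
lemma qu_ne: "quasi_uniformity S U \<Longrightarrow> U \<noteq> {}"
  unfolding quasi_uniformity_def by (elim conjE)

locale qp =
  fixes S :: "'a set" and \<delta> :: "'a set \<Rightarrow> 'a set \<Rightarrow> bool"
  assumes qp: "quasi_proximity S \<delta>"
begin

lemma ax1: "\<forall>A B. \<delta> A B \<longrightarrow> A \<subseteq> S \<and> B \<subseteq> S"
  using qp[unfolded quasi_proximity_def] by (rule conjunct1)
lemma ax2: "\<forall>A\<subseteq>S. \<not> \<delta> A {} \<and> \<not> \<delta> {} A"
  using qp[unfolded quasi_proximity_def] by (metis (no_types))
lemma ax3: "\<forall>A\<subseteq>S. \<forall>B\<subseteq>S. A \<inter> B \<noteq> {} \<longrightarrow> \<delta> A B"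
  using qp[unfolded quasi_proximity_def] by (metis (no_types))
lemma ax4: "\<forall>A\<subseteq>S. \<forall>B\<subseteq>S. \<forall>C\<subseteq>S. \<delta> (A \<union> B) C \<longleftrightarrow> \<delta> A C \<or> \<delta> B C"
  using qp[unfolded quasi_proximity_def] by (metis (no_types))
lemma ax5: "\<forall>A\<subseteq>S. \<forall>B\<subseteq>S. \<forall>C\<subseteq>S. \<delta> A (B \<union> C) \<longleftrightarrow> \<delta> A B \<or> \<delta> A C"
  using qp[unfolded quasi_proximity_def] by (metis (no_types))
lemma ax6: "\<forall>A\<subseteq>S. \<forall>B\<subseteq>S. \<not> \<delta> A B \<longrightarrow> (\<exists>C\<subseteq>S. \<not> \<delta> A C \<and> \<not> \<delta> (S - C) B)"
  using qp[unfolded quasi_proximity_def] by (metis (no_types))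

lemma sub: "\<delta> A B \<Longrightarrow> A \<subseteq> S \<and> B \<subseteq> S"
  using ax1 by blast

lemma nonemp: "\<delta> A B \<Longrightarrow> A \<noteq> {} \<and> B \<noteq> {}"
  using ax2 sub by blast

lemma inter: "A \<subseteq> S \<Longrightarrow> B \<subseteq> S \<Longrightarrow> A \<inter> B \<noteq> {} \<Longrightarrow> \<delta> A B"
  using ax3 by blast

lemma unL: "A \<subseteq> S \<Longrightarrow> B \<subseteq> S \<Longrightarrow> C \<subseteq> S \<Longrightarrow> \<delta> (A \<union> B) C \<longleftrightarrow> \<delta> A C \<or> \<delta> B C"
  using ax4 by blast

lemma unR: "A \<subseteq> S \<Longrightarrow> B \<subseteq> S \<Longrightarrow> C \<subseteq> S \<Longrightarrow> \<delta> A (B \<union> C) \<longleftrightarrow> \<delta> A B \<or> \<delta> A C"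
  using ax5 by blast

lemma strong: "A \<subseteq> S \<Longrightarrow> B \<subseteq> S \<Longrightarrow> \<not> \<delta> A B \<Longrightarrow> \<exists>C\<subseteq>S. \<not> \<delta> A C \<and> \<not> \<delta> (S - C) B"
  using ax6 by blast

lemma mono: assumes "\<delta> A B" "A \<subseteq> A'" "A' \<subseteq> S" "B \<subseteq> B'" "B' \<subseteq> S" shows "\<delta> A' B'"
proof -
  have "A' = A \<union> A'" "B' = B \<union> B'" using assms by auto
  have "\<delta> A' B" using unL[of A A' B] assms sub \<open>A' = A \<union> A'\<close> by auto
  then show ?thesis using unR[of A' B B'] assms sub \<open>B' = B \<union> B'\<close> by auto
qed

lemma far_disj: "C \<subseteq> S \<Longrightarrow> D \<subseteq> S \<Longrightarrow> \<not> \<delta> C D \<Longrightarrow> C \<inter> D = {}"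
  using inter by blast

lemma finite_unL:
  assumes "finite I" "\<And>i. i \<in> I \<Longrightarrow> A i \<subseteq> S" "\<delta> (\<Union>i\<in>I. A i) B"
  shows "\<exists>i\<in>I. \<delta> (A i) B"
  using assms
proof (induction I rule: finite_induct)
  case empty then show ?case using nonemp by auto
next
  case (insert j I)
  have "(\<Union>i\<in>insert j I. A i) = A j \<union> (\<Union>i\<in>I. A i)" by auto
  moreover have "(\<Union>i\<in>I. A i) \<subseteq> S" using insert by auto
  ultimately have "\<delta> (A j) B \<or> \<delta> (\<Union>i\<in>I. A i) B"
    using unL[of "A j" "\<Union>i\<in>I. A i" B] insert sub by auto
  then show ?case using insert by auto
qed

definition ent :: "'a set \<Rightarrow> 'a set \<Rightarrow> ('a \<times> 'a) set" where
  "ent C D = {(x,y). x \<in> S \<and> y \<in> S \<and> (x \<in> C \<longrightarrow> y \<notin> D)}"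

definition far :: "('a set \<times> 'a set) set" where
  "far = {(C,D). C \<subseteq> S \<and> D \<subseteq> S \<and> \<not> \<delta> C D}"

definition base :: "('a set \<times> 'a set) set \<Rightarrow> ('a \<times> 'a) set" where
  "base P = (S \<times> S) \<inter> \<Inter>((\<lambda>(C,D). ent C D) ` P)"

definition gen :: "('a \<times> 'a) set set \<Rightarrow> ('a \<times> 'a) set set" where
  "gen \<E> = {U. U \<subseteq> S \<times> S \<and> (\<exists>P F. finite P \<and> P \<subseteq> far \<and> finite F \<and> F \<subseteq> \<E> \<and> base P \<inter> \<Inter>F \<subseteq> U)}"

lemma genI: "U \<subseteq> S \<times> S \<Longrightarrow> finite P \<Longrightarrow> P \<subseteq> far \<Longrightarrow> finite F \<Longrightarrow> F \<subseteq> \<E> \<Longrightarrow> base P \<inter> \<Inter>F \<subseteq> U \<Longrightarrow> U \<in> gen \<E>"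
  unfolding gen_def by blast

lemma genE: assumes "U \<in> gen \<E>"
  obtains P F where "U \<subseteq> S \<times> S" "finite P" "P \<subseteq> far" "finite F" "F \<subseteq> \<E>" "base P \<inter> \<Inter>F \<subseteq> U"
  using assms unfolding gen_def by blast

lemma base_mem: "(x,y) \<in> base P \<longleftrightarrow> x \<in> S \<and> y \<in> S \<and> (\<forall>(C,D)\<in>P. x \<in> C \<longrightarrow> y \<notin> D)"
  unfolding base_def ent_def by auto

lemma base_Un: "base (P \<union> Q) = base P \<inter> base Q"
  unfolding base_def by auto

lemma red_step:
  assumes "\<delta> A B" "(C,D) \<in> far"
  shows "\<exists>A'\<subseteq>A. \<exists>B'\<subseteq>B. \<delta> A' B' \<and> (\<forall>x\<in>A'. \<forall>y\<in>B'. x \<in> C \<longrightarrow> y \<notin> D)"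
proof -
  have AS: "A \<subseteq> S" and BS: "B \<subseteq> S" using sub assms by auto
  have CD: "C \<subseteq> S" "D \<subseteq> S" "\<not> \<delta> C D" using assms(2) unfolding far_def by auto
  have "A = (A - C) \<union> (A \<inter> C)" by auto
  then have "\<delta> (A - C) B \<or> \<delta> (A \<inter> C) B" using unL[of "A - C" "A \<inter> C" B] AS BS assms(1) by auto
  then show ?thesis
  proof
    assume "\<delta> (A - C) B" then show ?thesis by (rule_tac x="A - C" in exI) auto
  next
    assume h: "\<delta> (A \<inter> C) B"
    have "B = (B - D) \<union> (B \<inter> D)" by auto
    then have "\<delta> (A \<inter> C) (B - D) \<or> \<delta> (A \<inter> C) (B \<inter> D)"
      using unR[of "A \<inter> C" "B - D" "B \<inter> D"] AS BS h by auto
    moreover have "\<not> \<delta> (A \<inter> C) (B \<inter> D)"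
      using mono[of "A \<inter> C" "B \<inter> D" C D] CD by auto
    ultimately have "\<delta> (A \<inter> C) (B - D)" by auto
    then show ?thesis by (rule_tac x="A \<inter> C" in exI, rule_tac conjI, blast, rule_tac x="B - D" in exI) auto
  qed
qed

lemma red:
  assumes "finite P" "P \<subseteq> far" "\<delta> A B"
  shows "\<exists>A'\<subseteq>A. \<exists>B'\<subseteq>B. \<delta> A' B' \<and> A' \<times> B' \<subseteq> base P"
  using assms
proof (induction P rule: finite_induct)
  case empty
  have "A \<times> B \<subseteq> base {}" using sub[OF empty(2)] by (auto simp: base_mem)
  then show ?case using empty by blast
next
  case (insert p P)
  then obtain A' B' where ab: "A' \<subseteq> A" "B' \<subseteq> B" "\<delta> A' B'" "A' \<times> B' \<subseteq> base P" by auto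
  obtain C D where p: "p = (C,D)" by force
  obtain A'' B'' where ab2: "A'' \<subseteq> A'" "B'' \<subseteq> B'" "\<delta> A'' B''" "\<forall>x\<in>A''. \<forall>y\<in>B''. x \<in> C \<longrightarrow> y \<notin> D"
    using red_step[OF ab(3), of C D] insert p by auto
  have "A'' \<times> B'' \<subseteq> base (insert p P)"
    using ab ab2 p unfolding base_mem by (auto simp: base_mem subset_iff)
  moreover have "A'' \<subseteq> A" "B'' \<subseteq> B" using ab ab2 by auto
  ultimately show ?case using ab2(3) by blast
qed


lemma base_sub: "base P \<subseteq> S \<times> S" unfolding base_def by auto

lemma Id_base: "P \<subseteq> far \<Longrightarrow> Id_on S \<subseteq> base P"
proof
  fix z assume P: "P \<subseteq> far" and z: "z \<in> Id_on S"
  then obtain x where x: "z = (x,x)" "x \<in> S" by (auto simp: Id_on_def)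
  have "\<forall>(C,D)\<in>P. x \<in> C \<longrightarrow> x \<notin> D"
  proof (clarify)
    fix C D assume "(C,D) \<in> P" "x \<in> C" "x \<in> D"
    then have "(C,D) \<in> far" using P by auto
    then show False using far_disj \<open>x \<in> C\<close> \<open>x \<in> D\<close> unfolding far_def by auto
  qed
  then show "z \<in> base P" using x by (simp add: base_mem)
qed

definition e :: "'a set \<Rightarrow> 'a set \<Rightarrow> 'a set" where
  "e C D = (SOME E. E \<subseteq> S \<and> \<not> \<delta> C E \<and> \<not> \<delta> (S - E) D)"

lemma e_prop: "(C,D) \<in> far \<Longrightarrow> e C D \<subseteq> S \<and> \<not> \<delta> C (e C D) \<and> \<not> \<delta> (S - e C D) D"
proof -
  assume "(C,D) \<in> far"
  then have "\<exists>E. E \<subseteq> S \<and> \<not> \<delta> C E \<and> \<not> \<delta> (S - E) D" using strong[of C D] unfolding far_def by auto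
  then show ?thesis unfolding e_def by (rule someI_ex)
qed

lemma base_half:
  assumes "finite P" "P \<subseteq> far"
  shows "\<exists>P'. finite P' \<and> P' \<subseteq> far \<and> base P' O base P' \<subseteq> base P"
proof -
  define P' where "P' = (\<lambda>(C,D). (C, e C D)) ` P \<union> (\<lambda>(C,D). (S - e C D, D)) ` P"
  have "finite P'" using assms unfolding P'_def by auto
  moreover have "P' \<subseteq> far"
  proof
    fix q assume "q \<in> P'"
    then obtain C D where CD: "(C,D) \<in> P" "q = (C, e C D) \<or> q = (S - e C D, D)" unfolding P'_def by auto
    then have "(C,D) \<in> far" using assms by auto
    then show "q \<in> far" using e_prop[of C D] CD unfolding far_def by auto
  qed
  moreover have "base P' O base P' \<subseteq> base P"
  proof
    fix z assume "z \<in> base P' O base P'"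
    then obtain x y w where z: "z = (x,w)" "(x,y) \<in> base P'" "(y,w) \<in> base P'" by auto
    have "\<forall>(C,D)\<in>P. x \<in> C \<longrightarrow> w \<notin> D"
    proof clarify
      fix C D assume CD: "(C,D) \<in> P" "x \<in> C" "w \<in> D"
      have "(C, e C D) \<in> P'" "(S - e C D, D) \<in> P'" using CD unfolding P'_def by force+
      then have "y \<notin> e C D" using z CD by (auto simp: base_mem)
      moreover have "y \<in> S" using z by (auto simp: base_mem)
      ultimately show False using z CD \<open>(S - e C D, D) \<in> P'\<close> by (auto simp: base_mem)
    qed
    then show "z \<in> base P" using z by (auto simp: base_mem)
  qed
  ultimately show ?thesis by blast
qed

lemma gen_qu:
  assumes hE: "\<And>E. E \<in> \<E> \<Longrightarrow> E \<subseteq> S \<times> S \<and> Id_on S \<subseteq> E \<and> trans E"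
  shows "quasi_uniformity S (gen \<E>)"
proof -
  have "S \<times> S \<in> gen \<E>" by (rule genI[of _ "{}" "{}"]) (auto simp: base_def)
  then have h1: "gen \<E> \<noteq> {}" by auto
  have h2: "\<forall>U\<in>gen \<E>. Id_on S \<subseteq> U \<and> U \<subseteq> S \<times> S"
  proof
    fix U assume "U \<in> gen \<E>"
    then obtain P F where PF: "U \<subseteq> S \<times> S" "finite P" "P \<subseteq> far" "finite F" "F \<subseteq> \<E>" "base P \<inter> \<Inter>F \<subseteq> U"
      by (rule genE)
    have "Id_on S \<subseteq> \<Inter>F" using PF hE by blast
    then show "Id_on S \<subseteq> U \<and> U \<subseteq> S \<times> S" using PF Id_base[of P] by blast
  qed
  have h3: "\<forall>U\<in>gen \<E>. \<forall>V\<in>gen \<E>. U \<inter> V \<in> gen \<E>"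
  proof (intro ballI)
    fix U V assume "U \<in> gen \<E>" "V \<in> gen \<E>"
    obtain P F where PF: "U \<subseteq> S \<times> S" "finite P" "P \<subseteq> far" "finite F" "F \<subseteq> \<E>" "base P \<inter> \<Inter>F \<subseteq> U"
      using \<open>U \<in> gen \<E>\<close> by (rule genE)
    obtain P2 F2 where PF2: "V \<subseteq> S \<times> S" "finite P2" "P2 \<subseteq> far" "finite F2" "F2 \<subseteq> \<E>" "base P2 \<inter> \<Inter>F2 \<subseteq> V"
      using \<open>V \<in> gen \<E>\<close> by (rule genE)
    have "base (P \<union> P2) \<inter> \<Inter>(F \<union> F2) \<subseteq> U \<inter> V" using PF PF2 by (auto simp: base_Un)
    then show "U \<inter> V \<in> gen \<E>" using PF PF2
      by (intro genI[of _ "P \<union> P2" "F \<union> F2"]) auto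
  qed
  have h4: "\<forall>U\<in>gen \<E>. \<forall>V. U \<subseteq> V \<and> V \<subseteq> S \<times> S \<longrightarrow> V \<in> gen \<E>"
  proof (intro ballI allI impI)
    fix U V assume "U \<in> gen \<E>" "U \<subseteq> V \<and> V \<subseteq> S \<times> S"
    then obtain P F where PF: "U \<subseteq> S \<times> S" "finite P" "P \<subseteq> far" "finite F" "F \<subseteq> \<E>" "base P \<inter> \<Inter>F \<subseteq> U"
      by (elim conjE genE)
    show "V \<in> gen \<E>" apply (rule genI[of _ P F]) using PF \<open>U \<subseteq> V \<and> V \<subseteq> S \<times> S\<close> by (simp_all, blast)
  qed
  have h5: "\<forall>U\<in>gen \<E>. \<exists>V\<in>gen \<E>. V O V \<subseteq> U"
  proof
    fix U assume "U \<in> gen \<E>"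
    then obtain P F where PF: "U \<subseteq> S \<times> S" "finite P" "P \<subseteq> far" "finite F" "F \<subseteq> \<E>" "base P \<inter> \<Inter>F \<subseteq> U"
      by (rule genE)
    obtain P' where P': "finite P'" "P' \<subseteq> far" "base P' O base P' \<subseteq> base P" using base_half[OF PF(2,3)] by blast
    define W where "W = base P' \<inter> \<Inter>F"
    have "W \<in> gen \<E>" unfolding W_def apply (rule genI[of _ P' F]) using P' PF base_sub by (simp_all, blast)
    moreover have "W O W \<subseteq> U"
    proof
      fix z assume "z \<in> W O W"
      then obtain x y w where z: "z = (x,w)" "(x,y) \<in> W" "(y,w) \<in> W" by auto
      have "(x,y) \<in> base P'" "(y,w) \<in> base P'" using z unfolding W_def by auto
      then have "(x,w) \<in> base P' O base P'" by (rule relcompI)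
      then have "(x,w) \<in> base P" using P'(3) by blast
      moreover have "(x,w) \<in> \<Inter>F"
      proof
        fix E assume "E \<in> F"
        then have "E \<in> \<E>" using PF(5) by blast
        then have "trans E" using hE[of E] by blast
        moreover have "(x,y) \<in> E" "(y,w) \<in> E" using z \<open>E \<in> F\<close> unfolding W_def by blast+
        ultimately show "(x,w) \<in> E" by (rule transD)
      qed
      ultimately have "(x,w) \<in> base P \<inter> \<Inter>F" by blast
      then show "z \<in> U" using PF(6) z(1) by blast
    qed
    ultimately show "\<exists>V\<in>gen \<E>. V O V \<subseteq> U" by blast
  qed
  show ?thesis unfolding quasi_uniformity_def using h1 h2 h3 h4 h5 by (intro conjI)
qed

lemma gen_mono: "\<E> \<subseteq> \<E>' \<Longrightarrow> gen \<E> \<subseteq> gen \<E>'"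
proof
  fix U assume "\<E> \<subseteq> \<E>'" "U \<in> gen \<E>"
  then obtain P F where PF: "U \<subseteq> S \<times> S" "finite P" "P \<subseteq> far" "finite F" "F \<subseteq> \<E>" "base P \<inter> \<Inter>F \<subseteq> U"
    by (elim genE)
  show "U \<in> gen \<E>'" apply (rule genI[of _ P F]) using PF \<open>\<E> \<subseteq> \<E>'\<close> by auto
qed

lemma ent_in: "(C,D) \<in> far \<Longrightarrow> ent C D \<in> gen \<E>"
  by (rule genI[of _ "{(C,D)}" "{}"]) (auto simp: ent_def base_def)

lemma qprox_le: "qprox_of S (gen \<E>) A B \<Longrightarrow> \<delta> A B"
proof (rule ccontr)
  assume q: "qprox_of S (gen \<E>) A B" and n: "\<not> \<delta> A B"
  then have AB: "A \<subseteq> S" "B \<subseteq> S" unfolding qprox_of_def by auto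
  then have "ent A B \<in> gen \<E>" using n by (intro ent_in) (auto simp: far_def)
  moreover have "(A \<times> B) \<inter> ent A B = {}" unfolding ent_def by auto
  ultimately show False using q unfolding qprox_of_def by blast
qed

lemma qprox_gen:
  assumes KP: "\<And>A B P F. \<delta> A B \<Longrightarrow> finite P \<Longrightarrow> P \<subseteq> far \<Longrightarrow> finite F \<Longrightarrow> F \<subseteq> \<E>
                \<Longrightarrow> (A \<times> B) \<inter> (base P \<inter> \<Inter>F) \<noteq> {}"
  shows "qprox_of S (gen \<E>) = \<delta>"
proof (intro ext iffI)
  fix A B assume "qprox_of S (gen \<E>) A B" then show "\<delta> A B" by (rule qprox_le)
next
  fix A B assume d: "\<delta> A B"
  show "qprox_of S (gen \<E>) A B" unfolding qprox_of_def
  proof (intro conjI ballI)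
    show "A \<subseteq> S" "B \<subseteq> S" using sub d by auto
  next
    fix U assume "U \<in> gen \<E>"
    then obtain P F where PF: "finite P" "P \<subseteq> far" "finite F" "F \<subseteq> \<E>" "base P \<inter> \<Inter>F \<subseteq> U"
      by (elim genE)
    then show "A \<times> B \<inter> U \<noteq> {}" using KP[OF d PF(1-4)] by blast
  qed
qed

lemma KP0: "\<delta> A B \<Longrightarrow> finite P \<Longrightarrow> P \<subseteq> far \<Longrightarrow> finite F \<Longrightarrow> F \<subseteq> {}
                \<Longrightarrow> (A \<times> B) \<inter> (base P \<inter> \<Inter>F) \<noteq> {}"
proof -
  assume d: "\<delta> A B" and fP: "finite P" and Pf: "P \<subseteq> far" and F0: "F \<subseteq> {}"
  obtain A' B' where ab: "A' \<subseteq> A" "B' \<subseteq> B" "\<delta> A' B'" "A' \<times> B' \<subseteq> base P"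
    using red[OF fP Pf d] by blast
  obtain a b where "a \<in> A'" "b \<in> B'" using nonemp[OF ab(3)] by blast
  then have "(a,b) \<in> A \<times> B" "(a,b) \<in> base P" using ab by blast+
  moreover have "F = {}" using F0 by blast
  ultimately have "(a,b) \<in> (A \<times> B) \<inter> (base P \<inter> \<Inter>F)" by simp
  then show ?thesis by blast
qed

lemma gen0_class: "gen {} \<in> qp_class S \<delta>"
proof -
  have "quasi_uniformity S (gen {})" by (rule gen_qu) simp
  moreover have "qprox_of S (gen {}) = \<delta>" apply (rule qprox_gen) apply (erule KP0) by assumption+
  ultimately show ?thesis unfolding qp_class_def by blast
qed

lemma gen0_min:
  assumes "U \<in> qp_class S \<delta>" shows "gen {} \<subseteq> U"
proof
  have qu: "quasi_uniformity S U" and qq: "qprox_of S U = \<delta>" using assms unfolding qp_class_def by auto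
  have Uint: "\<And>V W. V \<in> U \<Longrightarrow> W \<in> U \<Longrightarrow> V \<inter> W \<in> U"
    using qu_int[OF qu] by blast
  have Usup: "\<And>V W. V \<in> U \<Longrightarrow> V \<subseteq> W \<Longrightarrow> W \<subseteq> S \<times> S \<Longrightarrow> W \<in> U"
    using qu_sup[OF qu] by blast
  have Une: "U \<noteq> {}" using qu_ne[OF qu] .
  have Usub: "\<And>V. V \<in> U \<Longrightarrow> V \<subseteq> S \<times> S"
    using qu_sub[OF qu] by blast
  obtain V0 where "V0 \<in> U" using Une by blast
  have SS: "S \<times> S \<in> U" using Usup[OF \<open>V0 \<in> U\<close> Usub[OF \<open>V0 \<in> U\<close>]] by simp
  have entU: "ent C D \<in> U" if "(C,D) \<in> far" for C D
  proof -
    have "\<not> qprox_of S U C D" using qq that unfolding far_def by auto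
    moreover have "C \<subseteq> S" "D \<subseteq> S" using that unfolding far_def by auto
    ultimately obtain W where W: "W \<in> U" "C \<times> D \<inter> W = {}" unfolding qprox_of_def by blast
    have "W \<subseteq> ent C D"
    proof
      fix z assume "z \<in> W"
      then obtain x y where z: "z = (x,y)" "(x,y) \<in> W" by (cases z) auto
      then have "x \<in> S" "y \<in> S" using Usub[OF W(1)] by auto
      moreover have "x \<in> C \<longrightarrow> y \<notin> D" using W(2) z by blast
      ultimately show "z \<in> ent C D" using z unfolding ent_def by simp
    qed
    moreover have "ent C D \<subseteq> S \<times> S" unfolding ent_def by auto
    ultimately show ?thesis using Usup[OF W(1)] by blast
  qed
  have baseU: "finite P \<Longrightarrow> P \<subseteq> far \<Longrightarrow> base P \<in> U" for P
  proof (induction P rule: finite_induct)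
    case empty then show ?case using SS by (simp add: base_def)
  next
    case (insert p P)
    obtain C D where p: "p = (C,D)" by force
    have "base (insert p P) = base P \<inter> ent C D" using p unfolding base_def by auto
    moreover have "base P \<in> U" using insert.IH insert.prems by blast
    moreover have "ent C D \<in> U" using entU insert.prems p by blast
    ultimately show ?case using Uint by simp
  qed
  fix V assume "V \<in> gen {}"
  then obtain P F where "finite P" "P \<subseteq> far" "base P \<inter> \<Inter>F \<subseteq> V" "V \<subseteq> S \<times> S" "F \<subseteq> {}" by (elim genE)
  then have "base P \<subseteq> V" by auto
  then show "V \<in> U" using Usup[OF baseU[OF \<open>finite P\<close> \<open>P \<subseteq> far\<close>]] \<open>V \<subseteq> S \<times> S\<close> by blast
qed

lemma coarsest_eq: "coarsest_qu S \<delta> = gen {}"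
  unfolding coarsest_qu_def
proof (rule the_equality)
  show "gen {} \<in> qp_class S \<delta> \<and> (\<forall>U\<in>qp_class S \<delta>. gen {} \<subseteq> U)" using gen0_class gen0_min by auto
next
  fix V assume "V \<in> qp_class S \<delta> \<and> (\<forall>U\<in>qp_class S \<delta>. V \<subseteq> U)"
  then show "V = gen {}" using gen0_class gen0_min by blast
qed

lemma gen_trans:
  assumes t0: "transitive_qu (gen {})" and tE: "\<And>E. E \<in> \<E> \<Longrightarrow> trans E"
  shows "transitive_qu (gen \<E>)"
  unfolding transitive_qu_def
proof
  fix U assume "U \<in> gen \<E>"
  then obtain P F where PF: "U \<subseteq> S \<times> S" "finite P" "P \<subseteq> far" "finite F" "F \<subseteq> \<E>" "base P \<inter> \<Inter>F \<subseteq> U"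
    by (elim genE)
  have "base P \<in> gen {}" apply (rule genI[of _ P "{}"]) using PF base_sub by auto
  then obtain W where W: "W \<in> gen {}" "trans W" "W \<subseteq> base P" using t0 unfolding transitive_qu_def by blast
  then obtain P' F' where P': "finite P'" "P' \<subseteq> far" "base P' \<inter> \<Inter>F' \<subseteq> W" "W \<subseteq> S \<times> S" "F' \<subseteq> {}" by (elim genE)
  have "W \<inter> \<Inter>F \<in> gen \<E>" apply (rule genI[of _ P' F]) using P' PF by auto
  moreover have "trans (W \<inter> \<Inter>F)" using W(2) tE PF(5) unfolding trans_def by blast
  moreover have "W \<inter> \<Inter>F \<subseteq> U" using W PF by blast
  ultimately show "\<exists>V\<in>gen \<E>. trans V \<and> V \<subseteq> U" by blast
qed

end

lemma compat_from_qprox: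
  assumes "qp_compatible X \<delta>" "quasi_uniformity (topspace X) U" "qprox_of (topspace X) U = \<delta>"
  shows "qu_compatible X U"
  unfolding qu_compatible_def
proof (intro allI iffI)
  fix G assume G: "openin X G"
  then have Gs: "G \<subseteq> topspace X" and nd: "\<forall>x\<in>G. \<not> \<delta> {x} (topspace X - G)"
    using assms(1) unfolding qp_compatible_def by auto
  have Usub: "\<And>V. V \<in> U \<Longrightarrow> V \<subseteq> topspace X \<times> topspace X" using qu_sub[OF assms(2)] by blast
  have "\<exists>V\<in>U. V `` {x} \<subseteq> G" if "x \<in> G" for x
  proof -
    have "\<not> qprox_of (topspace X) U {x} (topspace X - G)" using nd that assms(3) by auto
    moreover have "{x} \<subseteq> topspace X" "topspace X - G \<subseteq> topspace X" using Gs that by auto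
    ultimately obtain V where "V \<in> U" "{x} \<times> (topspace X - G) \<inter> V = {}" unfolding qprox_of_def by blast
    then show ?thesis using Usub[OF \<open>V \<in> U\<close>] by (rule_tac x=V in bexI) auto
  qed
  then show "G \<subseteq> topspace X \<and> (\<forall>x\<in>G. \<exists>V\<in>U. V `` {x} \<subseteq> G)" using Gs by auto
next
  fix G assume h: "G \<subseteq> topspace X \<and> (\<forall>x\<in>G. \<exists>V\<in>U. V `` {x} \<subseteq> G)"
  have "\<not> \<delta> {x} (topspace X - G)" if xG: "x \<in> G" for x
  proof
    assume d: "\<delta> {x} (topspace X - G)"
    obtain V where "V \<in> U" "V `` {x} \<subseteq> G" using h xG by blast
    moreover have "{x} \<times> (topspace X - G) \<inter> V \<noteq> {}" using d \<open>V \<in> U\<close> assms(3) unfolding qprox_of_def by auto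
    ultimately show False by auto
  qed
  then show "openin X G" using h assms(1) unfolding qp_compatible_def by auto
qed




locale setting = qp S \<delta> for S :: "'a set" and \<delta> +
  fixes X :: "'a topology"
  assumes S: "S = topspace X" and comp: "qp_compatible X \<delta>"
begin

lemma open_far: "openin X K \<Longrightarrow> x \<in> K \<Longrightarrow> \<not> \<delta> {x} (S - K)"
  using comp S unfolding qp_compatible_def by blast

lemma open_iff: "openin X G \<longleftrightarrow> G \<subseteq> S \<and> (\<forall>x\<in>G. \<not> \<delta> {x} (S - G))"
  using comp S unfolding qp_compatible_def by blast

lemma point_nbhd:
  assumes x: "x \<in> S" and D: "D \<subseteq> S" and nd: "\<not> \<delta> {x} D"
  shows "\<exists>G. openin X G \<and> x \<in> G \<and> \<not> \<delta> G D"
proof -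
  obtain C where C: "C \<subseteq> S" "\<not> \<delta> {x} C" "\<not> \<delta> (S - C) D" using strong[of "{x}" D] x D nd by auto
  define G where "G = {y \<in> S. \<not> \<delta> {y} C}"
  have GS: "G \<subseteq> S" unfolding G_def by auto
  have "\<not> \<delta> {y} (S - G)" if y: "y \<in> G" for y
  proof -
    have yS: "y \<in> S" "\<not> \<delta> {y} C" using y unfolding G_def by auto
    obtain E where E: "E \<subseteq> S" "\<not> \<delta> {y} E" "\<not> \<delta> (S - E) C" using strong[of "{y}" C] yS C by auto
    have "S - G \<subseteq> E"
    proof
      fix z assume z: "z \<in> S - G"
      then have "\<delta> {z} C" unfolding G_def by auto
      show "z \<in> E"
      proof (rule ccontr)
        assume "z \<notin> E"
        then have "{z} \<subseteq> S - E" using z by auto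
        then have "\<delta> (S - E) C" using mono[OF \<open>\<delta> {z} C\<close>, of "S - E" C] C by auto
        then show False using E by auto
      qed
    qed
    then show ?thesis using E mono[of "{y}" "S - G" "{y}" E] yS by auto
  qed
  then have "openin X G" using open_iff GS by auto
  moreover have "x \<in> G" using x C unfolding G_def by auto
  moreover have "G \<subseteq> S - C"
  proof
    fix y assume "y \<in> G"
    then have "y \<in> S" "\<not> \<delta> {y} C" unfolding G_def by auto
    then show "y \<in> S - C" using inter[of "{y}" C] C by auto
  qed
  then have "\<not> \<delta> G D" using mono[of G D "S - C" D] C D by auto
  ultimately show ?thesis by blast
qed

lemma compact_far:
  assumes Kc: "compactin X K" and Ko: "openin X K"
  shows "\<not> \<delta> K (S - K)"
proof
  assume d: "\<delta> K (S - K)"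
  have KS: "K \<subseteq> S" using Ko S openin_subset by auto
  define \<U> where "\<U> = {G. openin X G \<and> \<not> \<delta> G (S - K)}"
  have "K \<subseteq> \<Union>\<U>"
  proof
    fix x assume "x \<in> K"
    then obtain G where "openin X G" "x \<in> G" "\<not> \<delta> G (S - K)"
      using point_nbhd[of x "S - K"] open_far[OF Ko] KS by blast
    then show "x \<in> \<Union>\<U>" unfolding \<U>_def by blast
  qed
  then obtain \<F> where F: "finite \<F>" "\<F> \<subseteq> \<U>" "K \<subseteq> \<Union>\<F>"
    using Kc unfolding compactin_def \<U>_def by (metis (no_types, lifting) mem_Collect_eq)
  have FS: "\<And>G. G \<in> \<F> \<Longrightarrow> G \<subseteq> S" using F(2) S openin_subset unfolding \<U>_def by blast
  have "\<delta> (\<Union>\<F>) (S - K)" using mono[OF d, of "\<Union>\<F>" "S - K"] F(3) FS by auto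
  then have "\<delta> (\<Union>G\<in>\<F>. G) (S - K)" by simp
  then obtain G where "G \<in> \<F>" "\<delta> G (S - K)" using finite_unL[of \<F> "\<lambda>G. G" "S - K"] F(1) FS by blast
  then show False using F(2) unfolding \<U>_def by blast
qed

lemma compact_near:
  assumes Kc: "compactin X K" and Ko: "openin X K" and AK: "A \<subseteq> K" and d: "\<delta> A B"
  shows "\<delta> A (B \<inter> K)"
proof -
  have KS: "K \<subseteq> S" using Ko S openin_subset by auto
  have BS: "B \<subseteq> S" "A \<subseteq> S" using sub d by auto
  have "B = (B \<inter> K) \<union> (B - K)" by auto
  then have "\<delta> A (B \<inter> K) \<or> \<delta> A (B - K)" using unR[of A "B \<inter> K" "B - K"] BS d by auto
  moreover have "\<not> \<delta> A (B - K)"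
  proof
    assume "\<delta> A (B - K)"
    then have "\<delta> K (S - K)" using mono[of A "B - K" K "S - K"] AK KS BS by auto
    then show False using compact_far[OF Kc Ko] by auto
  qed
  ultimately show ?thesis by auto
qed

end



locale pieces = setting S \<delta> X for S :: "'a set" and \<delta> and X +
  fixes K :: "nat \<Rightarrow> 'a set"
  assumes Kc: "\<And>n. compactin X (K n)" and Ko: "\<And>n. openin X (K n)"
    and Kne: "\<And>n. K n \<noteq> {}" and Kdisj: "\<And>m n. m \<noteq> n \<Longrightarrow> K m \<inter> K n = {}"
    and Kcov: "(\<Union>n. K n) = S"
begin

definition idx :: "'a \<Rightarrow> nat" where "idx x = (THE n. x \<in> K n)"

lemma idx_eq: "x \<in> K n \<Longrightarrow> idx x = n"
  unfolding idx_def using Kdisj by (intro the_equality) auto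

lemma idx_in: "x \<in> S \<Longrightarrow> x \<in> K (idx x)"
proof -
  assume "x \<in> S"
  then obtain n where "x \<in> K n" using Kcov by auto
  then show ?thesis using idx_eq by simp
qed

definition E :: "(nat \<Rightarrow> nat) \<Rightarrow> ('a \<times> 'a) set" where
  "E g = {(x,y). x \<in> S \<and> y \<in> S \<and> g (idx y) \<le> g (idx x)}"

lemma E_props: "E g \<subseteq> S \<times> S \<and> Id_on S \<subseteq> E g \<and> trans (E g)"
  unfolding E_def trans_def Id_on_def by auto

definition fto :: "(nat \<Rightarrow> nat) \<Rightarrow> bool" where
  "fto g \<longleftrightarrow> (\<forall>k. finite {n. g n \<le> k})"

lemma KPE:
  assumes G0: "\<And>g. g \<in> G0 \<Longrightarrow> fto g"
  and d: "\<delta> A B" and fP: "finite P" and Pf: "P \<subseteq> far" and fF: "finite F" and FE: "F \<subseteq> E ` G0"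
  shows "(A \<times> B) \<inter> (base P \<inter> \<Inter>F) \<noteq> {}"
proof -
  obtain A' B' where ab: "A' \<subseteq> A" "B' \<subseteq> B" "\<delta> A' B'" "A' \<times> B' \<subseteq> base P"
    using red[OF fP Pf d] by blast
  obtain G where G: "G \<subseteq> G0" "finite G" "F = E ` G" using finite_subset_image[OF fF FE] by blast
  have A'S: "A' \<subseteq> S" "B' \<subseteq> S" using sub ab(3) by auto
  have "\<exists>a\<in>A'. \<exists>b\<in>B'. \<forall>g\<in>G. g (idx b) \<le> g (idx a)"
  proof (cases "finite (idx ` A')")
    case False
    obtain b where b: "b \<in> B'" using nonemp[OF ab(3)] by blast
    define Bad where "Bad = (\<Union>g\<in>G. {n. g n \<le> g (idx b)})"
    have "finite Bad" unfolding Bad_def using G G0 unfolding fto_def by blast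
    then have "\<not> idx ` A' \<subseteq> Bad" using False finite_subset by blast
    then obtain a where a: "a \<in> A'" "idx a \<notin> Bad" by blast
    have "\<forall>g\<in>G. g (idx b) \<le> g (idx a)"
    proof
      fix g assume "g \<in> G"
      show "g (idx b) \<le> g (idx a)"
      proof (rule ccontr)
        assume "\<not> g (idx b) \<le> g (idx a)"
        then have "idx a \<in> Bad" unfolding Bad_def using \<open>g \<in> G\<close> using less_imp_le by (auto simp: not_le)
        then show False using a by auto
      qed
    qed
    then show ?thesis using a b by blast
  next
    case True
    have "A' = (\<Union>n\<in>idx ` A'. A' \<inter> K n)"
    proof
      show "A' \<subseteq> (\<Union>n\<in>idx ` A'. A' \<inter> K n)" using idx_in A'S by blast
    qed auto
    then have "\<delta> (\<Union>n\<in>idx ` A'. A' \<inter> K n) B'" using ab(3) by simp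
    then obtain n where "n \<in> idx ` A'" "\<delta> (A' \<inter> K n) B'"
      using finite_unL[OF True, of "\<lambda>n. A' \<inter> K n" B'] A'S by blast
    then have "\<delta> (A' \<inter> K n) (B' \<inter> K n)" using compact_near[OF Kc Ko] by blast
    then obtain a b where "a \<in> A' \<inter> K n" "b \<in> B' \<inter> K n" using nonemp by blast
    moreover then have "idx a = n" "idx b = n" using idx_eq by auto
    ultimately show ?thesis by (metis IntD1 order_refl)
  qed
  then obtain a b where a: "a \<in> A'" "b \<in> B'" "\<forall>g\<in>G. g (idx b) \<le> g (idx a)" by blast
  have "(a,b) \<in> A \<times> B" "(a,b) \<in> base P" using ab a by blast+
  moreover have "(a,b) \<in> \<Inter>F" using G a A'S unfolding E_def by auto
  ultimately show ?thesis by blast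
qed

lemma gen_E_class:
  assumes "\<And>g. g \<in> G0 \<Longrightarrow> fto g"
  shows "quasi_uniformity S (gen (E ` G0)) \<and> qprox_of S (gen (E ` G0)) = \<delta>"
proof
  show "quasi_uniformity S (gen (E ` G0))" by (rule gen_qu) (use E_props in blast)
  show "qprox_of S (gen (E ` G0)) = \<delta>"
    by (rule qprox_gen) (rule KPE[OF assms]; assumption)
qed

end



definition bitc :: "nat set \<Rightarrow> nat \<Rightarrow> bool" where
  "bitc T c = (T \<inter> set_decode (fst (prod_decode c)) = set_decode (snd (prod_decode c)))"

definition fam :: "nat set \<Rightarrow> nat \<Rightarrow> nat" where
  "fam T n = (let b = fst (prod_decode n); j = snd (prod_decode n); L = snd (prod_decode b) in
     if j < L then (if bitc T (fst (prod_decode b)) then b + (L - j) else b + j) else n)"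

lemma fam_fin: "finite {n. fam T n \<le> k}"
proof -
  have "{n. fam T n \<le> k} \<subseteq> {..k} \<union> prod_encode ` ({..k} \<times> {..k})"
  proof
    fix n assume n: "n \<in> {n. fam T n \<le> k}"
    obtain b j where bj: "prod_decode n = (b,j)" by force
    obtain c L where cL: "prod_decode b = (c,L)" by force
    have nbj: "n = prod_encode (b,j)" using bj by (metis prod_decode_inverse)
    have Lb: "L \<le> b" using cL le_prod_encode_2[of L c] by (metis prod_decode_inverse)
    show "n \<in> {..k} \<union> prod_encode ` ({..k} \<times> {..k})"
    proof (cases "j < L")
      case True
      then have "b \<le> fam T n" unfolding fam_def Let_def using bj cL by auto
      then have "b \<le> k" using n by auto
      then have "(b,j) \<in> {..k} \<times> {..k}" using True Lb by auto
      then show ?thesis using nbj by blast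
    next
      case False
      then have "fam T n = n" unfolding fam_def Let_def using bj cL by auto
      then show ?thesis using n by auto
    qed
  qed
  then show ?thesis by (rule finite_subset) auto
qed

lemma comb:
  fixes L :: nat
  assumes fin: "finite \<A>" and T: "T \<notin> \<A>"
  shows "\<exists>q. \<forall>i j. i < j \<longrightarrow> j < L \<longrightarrow> (\<forall>S\<in>\<A>. fam S (q i) \<le> fam S (q j)) \<and> fam T (q j) < fam T (q i)"
proof -
  define p where "p S = (SOME x. (x \<in> S) \<noteq> (x \<in> T))" for S
  have p: "(p S \<in> S) \<noteq> (p S \<in> T)" if "S \<in> \<A>" for S
  proof -
    have "S \<noteq> T" using that T by auto
    then have "\<exists>x. (x \<in> S) \<noteq> (x \<in> T)" by blast
    then show ?thesis unfolding p_def by (rule someI_ex)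
  qed
  define Fin where "Fin = p ` \<A>"
  have fFin: "finite Fin" using fin unfolding Fin_def by auto
  define c where "c = prod_encode (set_encode Fin, set_encode (T \<inter> Fin))"
  have dc: "prod_decode c = (set_encode Fin, set_encode (T \<inter> Fin))" unfolding c_def by simp
  have bT: "bitc T c" unfolding bitc_def dc using fFin by simp
  have bS: "\<not> bitc S c" if "S \<in> \<A>" for S
  proof
    assume "bitc S c"
    then have eq: "S \<inter> Fin = T \<inter> Fin" unfolding bitc_def dc using fFin by simp
    have "p S \<in> Fin" using that unfolding Fin_def by auto
    then show False using eq p[OF that] by blast
  qed
  define b where "b = prod_encode (c, L)"
  define q where "q i = prod_encode (b, i)" for i
  have fq: "fam S (q i) = (if bitc S c then b + (L - i) else b + i)" if "i < L" for S i
    unfolding fam_def q_def Let_def b_def using that by simp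
  show ?thesis
  proof (rule exI[of _ q], intro allI impI conjI ballI)
    fix i j S assume ij: "i < j" "j < L" and S: "S \<in> \<A>"
    then show "fam S (q i) \<le> fam S (q j)" using fq bS[OF S] by simp
  next
    fix i j assume ij: "i < j" "j < L"
    then show "fam T (q j) < fam T (q i)" using fq bT by simp
  qed
qed

context pieces
begin

lemma fto_fam: "fto (fam T)"
  unfolding fto_def using fam_fin by blast

lemma dist:
  assumes T: "T \<notin> \<A>"
  shows "E (fam T) \<notin> gen (E ` fam ` \<A>)"
proof
  assume "E (fam T) \<in> gen (E ` fam ` \<A>)"
  then obtain P F where PF: "finite P" "P \<subseteq> far" "finite F" "F \<subseteq> E ` fam ` \<A>" "base P \<inter> \<Inter>F \<subseteq> E (fam T)"
    by (elim genE)
  have "F \<subseteq> (E \<circ> fam) ` \<A>" using PF(4) by (simp add: image_comp)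
  then obtain \<A>' where A': "\<A>' \<subseteq> \<A>" "finite \<A>'" "F = (E \<circ> fam) ` \<A>'"
    using finite_subset_image[OF PF(3)] by blast
  have T': "T \<notin> \<A>'" using T A' by auto
  define L where "L = Suc (card (Pow P \<times> Pow P))"
  obtain q where q: "\<And>i j. i < j \<Longrightarrow> j < L \<Longrightarrow> (\<forall>S\<in>\<A>'. fam S (q i) \<le> fam S (q j)) \<and> fam T (q j) < fam T (q i)"
    using comb[OF A'(2) T', of L] by blast
  define pt where "pt i = (SOME x. x \<in> K (q i))" for i
  have pt: "pt i \<in> K (q i)" for i unfolding pt_def using Kne[of "q i"] by (metis ex_in_conv someI_ex)
  have ptS: "pt i \<in> S" for i using pt Kcov by blast
  have idxp: "idx (pt i) = q i" for i using idx_eq pt by blast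
  define \<phi> where "\<phi> x = ({c\<in>P. x \<in> fst c}, {c\<in>P. x \<in> snd c})" for x
  have "\<not> inj_on (\<phi> \<circ> pt) {..<L}"
  proof
    assume inj: "inj_on (\<phi> \<circ> pt) {..<L}"
    have "(\<phi> \<circ> pt) ` {..<L} \<subseteq> Pow P \<times> Pow P" unfolding \<phi>_def by auto
    moreover have "finite (Pow P \<times> Pow P)" using PF(1) by auto
    ultimately have "card {..<L} \<le> card (Pow P \<times> Pow P)" using card_inj_on_le[OF inj] by blast
    then show False unfolding L_def by simp
  qed
  then obtain i j where ij: "i < L" "j < L" "i \<noteq> j" "\<phi> (pt i) = \<phi> (pt j)"
    unfolding inj_on_def by auto
  have key: False if "i < j" "j < L" "\<phi> (pt i) = \<phi> (pt j)" for i j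
  proof -
    define x where "x = pt j"
    define y where "y = pt i"
    have same: "\<And>C D. (C,D) \<in> P \<Longrightarrow> (x \<in> C \<longleftrightarrow> y \<in> C) \<and> (x \<in> D \<longleftrightarrow> y \<in> D)"
      using that(3) unfolding \<phi>_def x_def y_def by (auto simp: set_eq_iff)
    have "(x,y) \<in> base P" unfolding base_mem
    proof (intro conjI)
      show "x \<in> S" "y \<in> S" unfolding x_def y_def using ptS by auto
      show "\<forall>(C, D)\<in>P. x \<in> C \<longrightarrow> y \<notin> D"
      proof clarify
        fix C D assume CD: "(C,D) \<in> P" "x \<in> C" "y \<in> D"
        then have "y \<in> C" using same by blast
        moreover have "(C,D) \<in> far" using CD PF(2) by auto
        ultimately show False using far_disj CD(3) unfolding far_def by auto
      qed
    qed
    moreover have "(x,y) \<in> \<Inter>F"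
    proof
      fix R assume "R \<in> F"
      then obtain S where S: "S \<in> \<A>'" "R = E (fam S)" using A' by auto
      have "fam S (q i) \<le> fam S (q j)" using q[OF that(1,2)] S by blast
      then show "(x,y) \<in> R" using S ptS idxp unfolding E_def x_def y_def by simp
    qed
    moreover have "(x,y) \<notin> E (fam T)"
      using q[OF that(1,2)] idxp unfolding E_def x_def y_def by auto
    ultimately show False using PF(5) by blast
  qed
  show False
  proof (cases "i < j")
    case True then show False using key ij by blast
  next
    case False then have "j < i" using ij by auto
    then show False using key ij by metis
  qed
qed

end



lemma decomp:
  fixes X :: "'a topology"
  assumes lc: "locally_compact_space X" and hd: "Hausdorff_space X" and nc: "\<not> compact_space X"
    and lin: "Lindelof_space X" and z: "X dim_le 0"
  shows "\<exists>K::nat \<Rightarrow> 'a set. (\<forall>n. compactin X (K n)) \<and> (\<forall>n. openin X (K n)) \<and> (\<forall>n. K n \<noteq> {})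
           \<and> (\<forall>m n. m \<noteq> n \<longrightarrow> K m \<inter> K n = {}) \<and> (\<Union>n. K n) = topspace X"
proof -
  define \<U> where "\<U> = {U. openin X U \<and> compactin X U}"
  have nb: "neighbourhood_base_of (\<lambda>U. closedin X U \<and> openin X U) X"
    using z dimension_le_0_neighbourhood_base_of_clopen by blast
  have cov: "\<Union>\<U> = topspace X"
  proof
    show "\<Union>\<U> \<subseteq> topspace X" unfolding \<U>_def using openin_subset by blast
  next
    show "topspace X \<subseteq> \<Union>\<U>"
    proof
      fix x assume x: "x \<in> topspace X"
      obtain U C where UC: "openin X U" "compactin X C" "x \<in> U" "U \<subseteq> C"
        using lc x unfolding locally_compact_space_def by meson
      have "\<exists>U' V. openin X U' \<and> (closedin X V \<and> openin X V) \<and> x \<in> U' \<and> U' \<subseteq> V \<and> V \<subseteq> U"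
        using nb[unfolded neighbourhood_base_of] UC(1,3) by blast
      then obtain U' V where V: "openin X U'" "closedin X V" "openin X V" "x \<in> U'" "U' \<subseteq> V" "V \<subseteq> U"
        by blast
      have "V \<subseteq> C" using V UC by blast
      then have "compactin X V" using closed_compactin[OF UC(2) _ V(2)] by blast
      then show "x \<in> \<Union>\<U>" using V unfolding \<U>_def by blast
    qed
  qed
  have Uo: "\<And>U. U \<in> \<U> \<Longrightarrow> openin X U" unfolding \<U>_def by blast
  have "\<exists>\<V>. countable \<V> \<and> \<V> \<subseteq> \<U> \<and> \<Union>\<V> = topspace X"
    by (rule Lindelof_spaceD[OF lin Uo cov])
  then obtain \<V> where V: "countable \<V>" "\<V> \<subseteq> \<U>" "\<Union>\<V> = topspace X"
    by (elim exE conjE)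
  have tne: "topspace X \<noteq> {}"
  proof
    assume "topspace X = {}"
    then have "compact_space X" unfolding compact_space_def by (metis compactin_empty)
    then show False using nc by blast
  qed
  then have Vne: "\<V> \<noteq> {}" using V(3) by (metis Union_empty)
  define C where "C = from_nat_into \<V>"
  have rC: "range C = \<V>" unfolding C_def using V(1) Vne by simp
  have CU: "C n \<in> \<U>" for n using rC V(2) by blast
  have Cc: "compactin X (C n)" and Co: "openin X (C n)" for n
    using CU[of n] unfolding \<U>_def by blast+
  have Ccl: "closedin X (C n)" for n using compactin_imp_closedin[OF hd Cc] .
  define D where "D n = C n - (\<Union>i<n. C i)" for n
  have Dsub: "D n \<subseteq> C n" for n unfolding D_def by auto
  have Do: "openin X (D n)" for n
  proof -
    have "closedin X (\<Union>(C ` {..<n}))" by (rule closedin_Union) (auto simp: Ccl)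
    then show ?thesis unfolding D_def by (rule openin_diff[OF Co])
  qed
  have Dc: "compactin X (D n)" for n
  proof -
    have "openin X (\<Union>(C ` {..<n}))" by (rule openin_Union) (auto simp: Co)
    then have "closedin X (D n)" unfolding D_def by (rule closedin_diff[OF Ccl])
    then show ?thesis by (rule closed_compactin[OF Cc Dsub])
  qed
  have Ddisj: "D m \<inter> D n = {}" if "m \<noteq> n" for m n
  proof -
    have *: "D m \<inter> D n = {}" if "m < n" for m n
    proof -
      have "C m \<subseteq> (\<Union>i<n. C i)" using that by blast
      then show ?thesis using Dsub[of m] unfolding D_def by blast
    qed
    show ?thesis
    proof (cases "m < n")
      case True then show ?thesis using * by blast
    next
      case False then have "n < m" using \<open>m \<noteq> n\<close> by auto
      then show ?thesis using *[of n m] by blast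
    qed
  qed
  have Dcov: "(\<Union>n. D n) = topspace X"
  proof
    show "(\<Union>n. D n) \<subseteq> topspace X" using Dsub Co openin_subset by blast
  next
    show "topspace X \<subseteq> (\<Union>n. D n)"
    proof
      fix x assume "x \<in> topspace X"
      then obtain n where "x \<in> C n" using V(3) rC by blast
      define m where "m = (LEAST n. x \<in> C n)"
      have "x \<in> C m" unfolding m_def by (rule LeastI) fact
      moreover have "x \<notin> C i" if "i < m" for i using that not_less_Least unfolding m_def by blast
      ultimately have "x \<in> D m" unfolding D_def by blast
      then show "x \<in> (\<Union>n. D n)" by blast
    qed
  qed
  define N where "N = {n. D n \<noteq> {}}"
  have infN: "infinite N"
  proof
    assume "finite N"
    have "(\<Union>n. D n) \<subseteq> \<Union>(D ` N)" unfolding N_def by blast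
    then have "topspace X = \<Union>(D ` N)" using Dcov by blast
    moreover have "compactin X (\<Union>(D ` N))" by (rule compactin_Union) (use \<open>finite N\<close> Dc in auto)
    ultimately show False using nc unfolding compact_space_def by simp
  qed
  define K where "K k = D (enumerate N k)" for k
  have "\<forall>n. K n \<noteq> {}" unfolding K_def using enumerate_in_set[OF infN] unfolding N_def by simp
  moreover have "\<forall>m n. m \<noteq> n \<longrightarrow> K m \<inter> K n = {}"
  proof (intro allI impI)
    fix m n :: nat assume "m \<noteq> n"
    then have "enumerate N m \<noteq> enumerate N n" using inj_enumerate[OF infN] by (meson injD)
    then show "K m \<inter> K n = {}" unfolding K_def by (rule Ddisj)
  qed
  moreover have "(\<Union>n. K n) = topspace X"
  proof
    show "(\<Union>n. K n) \<subseteq> topspace X" unfolding K_def using Dcov by blast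
  next
    show "topspace X \<subseteq> (\<Union>n. K n)"
    proof
      fix x assume "x \<in> topspace X"
      then obtain n where n: "x \<in> D n" using Dcov by blast
      then have "n \<in> N" unfolding N_def by auto
      then obtain k where "enumerate N k = n" using enumerate_Ex[OF infN] by blast
      then show "x \<in> (\<Union>n. K n)" using n unfolding K_def by blast
    qed
  qed
  moreover have "\<forall>n. compactin X (K n)" "\<forall>n. openin X (K n)" unfolding K_def using Dc Do by simp_all
  ultimately show ?thesis by (intro exI[of _ K] conjI)
qed

theorem corollary2p13:
  fixes X :: "'a topology" and \<delta> :: "'a set \<Rightarrow> 'a set \<Rightarrow> bool"
  assumes "locally_compact_space X" and "Hausdorff_space X"
    and "\<not> compact_space X" and "Lindelof_space X" and "X dim_le 0"
    and "quasi_proximity (topspace X) \<delta>" and "qp_compatible X \<delta>"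
    and "transitive_qu (coarsest_qu (topspace X) \<delta>)"
  shows "\<exists>f :: nat set set \<Rightarrow> ('a \<times> 'a) set set.
           inj f \<and> range f \<subseteq> qp_class (topspace X) \<delta> \<inter> transitive_compatible_qus X"
proof -
  obtain K :: "nat \<Rightarrow> 'a set" where K: "\<forall>n. compactin X (K n)" "\<forall>n. openin X (K n)" "\<forall>n. K n \<noteq> {}"
       "\<forall>m n. m \<noteq> n \<longrightarrow> K m \<inter> K n = {}" "(\<Union>n. K n) = topspace X"
    using decomp[OF assms(1-5)] by blast
  interpret pieces "topspace X" \<delta> X K
    apply unfold_locales
    using assms(6,7) K by auto
  have t0: "transitive_qu (gen {})" using assms(8) coarsest_eq by simp
  define f where "f \<A> = gen (E ` fam ` \<A>)" for \<A>
  have mem: "E (fam T) \<in> f \<A>" if "T \<in> \<A>" for T \<A>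
    unfolding f_def
    apply (rule genI[of _ "{}" "{E (fam T)}"])
    using that E_props by auto
  have "inj f"
  proof (rule injI)
    fix \<A> \<B> assume eq: "f \<A> = f \<B>"
    show "\<A> = \<B>"
    proof (rule set_eqI)
      fix T show "T \<in> \<A> \<longleftrightarrow> T \<in> \<B>"
        using mem[of T \<A>] mem[of T \<B>] dist[of T \<A>] dist[of T \<B>] eq unfolding f_def by metis
    qed
  qed
  moreover have "range f \<subseteq> qp_class (topspace X) \<delta> \<inter> transitive_compatible_qus X"
  proof
    fix U assume "U \<in> range f"
    then obtain \<A> where U: "U = gen (E ` fam ` \<A>)" unfolding f_def by blast
    have fto: "\<And>g. g \<in> fam ` \<A> \<Longrightarrow> fto g" using fto_fam by blast
    have qu: "quasi_uniformity (topspace X) U" and qq: "qprox_of (topspace X) U = \<delta>"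
      using gen_E_class[OF fto] U by auto
    have "qu_compatible X U" using compat_from_qprox[OF assms(7) qu qq] .
    moreover have "transitive_qu U" unfolding U by (rule gen_trans[OF t0]) (use E_props in blast)
    ultimately show "U \<in> qp_class (topspace X) \<delta> \<inter> transitive_compatible_qus X"
      using qu qq unfolding qp_class_def transitive_compatible_qus_def by blast
  qed
  ultimately show ?thesis by blast
qed


end
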